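(* Under the setting of Theorem 1 (with $\mathcal{S}$, $h$, $m$, $\delta=\operatorname{TV}(m,h)>0$, $n,k$, $\alpha\in[0,1]$ with $(1-\alpha)nk\in\mathbb{Z}$, $H_{long}=h^{\otimes nk}$ and $M_{long}=m^{\otimes (1-\alpha)nk}\otimes h^{\otimes \alpha nk}$), every measurable detector score $D:\mathcal{S}^{nk}\to\mathbb{R}$ satisfies $$\operatorname{AUROC}(D)\le 1-\tfrac{1}{2}(1-\delta)^{2nk(1-\alpha)}.$$
   Context: For probability measures $P,Q$, $\operatorname{TV}(P,Q)=\sup_A|P(A)-Q(A)|$ over measurable sets $A$. For a score $D$, with $X\sim M_{long}$ and $Y\sim H_{long}$ independent, $\operatorname{AUROC}(D)=\Pr(D(X)>D(Y))+\tfrac12\Pr(D(X)=D(Y))$, i.e. the area under the ROC curve (true positive rate on $M_{long}$ against false positive rate on $H_{long}$) of the detector that thresholds $D$. The long human text consists of $nk$ i.i.d. sequences from $h$; the long machine text consists of $(1-\alpha)nk$ independent sequences from $m$ and $\alpha nk$ independent sequences from $h$. *)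

theory Defs
  imports "HOL-Probability.Probability"
begin

definition TV :: "'a measure \<Rightarrow> 'a measure \<Rightarrow> real" where
  "TV P Q = (SUP A \<in> sets P. \<bar>measure P A - measure Q A\<bar>)"

definition AUROC :: "'b measure \<Rightarrow> 'b measure \<Rightarrow> ('b \<Rightarrow> real) \<Rightarrow> real" where
  "AUROC Mlong Hlong D =
     measure (Mlong \<Otimes>\<^sub>M Hlong) {p \<in> space (Mlong \<Otimes>\<^sub>M Hlong). D (fst p) > D (snd p)}
     + 1/2 * measure (Mlong \<Otimes>\<^sub>M Hlong) {p \<in> space (Mlong \<Otimes>\<^sub>M Hlong). D (fst p) = D (snd p)}"

text \<open>Long texts: nk sequences; machine text has the first L = (1-alpha)nk from m, rest from h.\<close>
definition H_long :: "'a measure \<Rightarrow> nat \<Rightarrow> (nat \<Rightarrow> 'a) measure" where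
  "H_long h N = PiM {..<N} (\<lambda>_. h)"

definition M_long :: "'a measure \<Rightarrow> 'a measure \<Rightarrow> nat \<Rightarrow> nat \<Rightarrow> (nat \<Rightarrow> 'a) measure" where
  "M_long m h L N = PiM {..<N} (\<lambda>i. if i < L then m else h)"

end

theory Submission imports Defs begin
lemma PiM_density:
  assumes fin: "finite I" and sf: "sigma_finite_measure N"
    and q[measurable]: "\<And>i. q i \<in> borel_measurable N"
    and sfd: "\<And>i. sigma_finite_measure (density N (q i))"
  shows "density (PiM I (\<lambda>_. N)) (\<lambda>x. \<Prod>i\<in>I. q i (x i)) = PiM I (\<lambda>i. density N (q i))"
proof -
  interpret P: product_sigma_finite "\<lambda>i. density N (q i)"
    using sfd by (simp add: product_sigma_finite_def)
  interpret Q: product_sigma_finite "\<lambda>_. N"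
    using sf by (simp add: product_sigma_finite_def)
  show ?thesis
  proof (rule P.PiM_eqI[OF fin])
    show "sets (density (PiM I (\<lambda>_. N)) (\<lambda>x. \<Prod>i\<in>I. q i (x i))) = sets (PiM I (\<lambda>i. density N (q i)))"
      unfolding sets_density by (rule sets_PiM_cong) simp_all
  next
    fix A assume A: "\<And>i. i \<in> I \<Longrightarrow> A i \<in> sets (density N (q i))"
    then have A': "\<And>i. i \<in> I \<Longrightarrow> A i \<in> sets N" by simp
    have PA: "Pi\<^sub>E I A \<in> sets (PiM I (\<lambda>_. N))"
      using sets_PiM_I_finite[OF fin, of A "\<lambda>_. N"] A' by blast
    have "emeasure (density (PiM I (\<lambda>_. N)) (\<lambda>x. \<Prod>i\<in>I. q i (x i))) (Pi\<^sub>E I A)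
       = (\<integral>\<^sup>+x. (\<Prod>i\<in>I. q i (x i)) * indicator (Pi\<^sub>E I A) x \<partial>PiM I (\<lambda>_. N))"
      using PA by (subst emeasure_density) auto
    also have "\<dots> = (\<integral>\<^sup>+x. (\<Prod>i\<in>I. q i (x i) * indicator (A i) (x i)) \<partial>PiM I (\<lambda>_. N))"
    proof (intro nn_integral_cong)
      fix x assume "x \<in> space (PiM I (\<lambda>_. N))"
      then have "x \<in> extensional I" by (simp add: space_PiM PiE_def)
      then show "(\<Prod>i\<in>I. q i (x i)) * indicator (Pi\<^sub>E I A) x = (\<Prod>i\<in>I. q i (x i) * indicator (A i) (x i))"
        by (auto simp: prod.distrib indicator_def PiE_def Pi_def prod_zero_iff fin)
    qed
    also have "\<dots> = (\<Prod>i\<in>I. \<integral>\<^sup>+y. q i y * indicator (A i) y \<partial>N)"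
      using A' by (intro Q.product_nn_integral_prod fin) auto
    also have "\<dots> = (\<Prod>i\<in>I. emeasure (density N (q i)) (A i))"
      using A' by (intro prod.cong refl) (simp add: emeasure_density)
    finally show "emeasure (density (PiM I (\<lambda>_. N)) (\<lambda>x. \<Prod>i\<in>I. q i (x i))) (Pi\<^sub>E I A) = (\<Prod>i\<in>I. emeasure (density N (q i)) (A i))" .
  qed
qed

lemma TV_bounds:
  assumes "prob_space m" "prob_space h" "sets m = sets h" "A \<in> sets m"
  shows "\<bar>measure m A - measure h A\<bar> \<le> TV m h" "TV m h \<le> 1"
proof -
  interpret m: prob_space m by fact
  interpret h: prob_space h by fact
  have bd: "\<And>B. \<bar>measure m B - measure h B\<bar> \<le> 1"
    by (smt (verit) m.prob_le_1 h.prob_le_1 measure_nonneg)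
  show "\<bar>measure m A - measure h A\<bar> \<le> TV m h"
    unfolding TV_def using assms(4) bd by (intro cSUP_upper bdd_aboveI2) auto
  show "TV m h \<le> 1"
    unfolding TV_def using bd by (intro cSUP_least) auto
qed

lemma common_part:
  assumes pm: "prob_space m" and ph: "prob_space h" and ss: "sets m = sets h"
  obtains \<nu> f g where "finite_measure \<nu>" "sets \<nu> = sets m"
    "f \<in> borel_measurable \<nu>" "g \<in> borel_measurable \<nu>"
    "density \<nu> f = m" "density \<nu> g = h"
    "ennreal (1 - TV m h) \<le> (\<integral>\<^sup>+x. min (f x) (g x) \<partial>\<nu>)"
proof -
  interpret m: prob_space m by fact
  interpret h: prob_space h by fact
  define \<nu> where "\<nu> = sup_measure' m h"
  have ssh: "sets h = sets m" using ss by simp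
  have sets\<nu>: "sets \<nu> = sets m" unfolding \<nu>_def by (simp add: sets_sup_measure'[OF ssh])
  have le1: "emeasure m X \<le> emeasure \<nu> X" if "X \<in> sets m" for X
    unfolding \<nu>_def using le_emeasure_sup_measure'1[OF ssh that] .
  have le2: "emeasure h X \<le> emeasure \<nu> X" if "X \<in> sets m" for X
    unfolding \<nu>_def using le_emeasure_sup_measure'2[OF ssh that] .
  have "emeasure \<nu> (space m) \<le> 2"
  proof -
    have "emeasure \<nu> (space m) = (SUP Y\<in>sets m. emeasure m (space m \<inter> Y) + emeasure h (space m \<inter> - Y))"
      unfolding \<nu>_def by (rule emeasure_sup_measure'[OF ssh]) simp
    also have "\<dots> \<le> 1 + 1"
      by (intro SUP_least add_mono m.emeasure_le_1 h.emeasure_le_1)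
    finally show ?thesis by simp
  qed
  moreover have "space \<nu> = space m" using sets\<nu> by (rule sets_eq_imp_space_eq)
  ultimately have fin: "finite_measure \<nu>"
    by (intro finite_measureI) (auto simp: top_unique)
  interpret \<nu>: finite_measure \<nu> by fact
  have acm: "absolutely_continuous \<nu> m"
    unfolding absolutely_continuous_def
    using le1 sets\<nu> by (auto simp: null_sets_def) (metis le_zero_eq)
  have ach: "absolutely_continuous \<nu> h"
    unfolding absolutely_continuous_def
    using le2 sets\<nu> ssh by (auto simp: null_sets_def) (metis le_zero_eq)
  obtain f where f: "f \<in> borel_measurable \<nu>" "density \<nu> f = m"
    using \<nu>.Radon_Nikodym[OF acm] sets\<nu> by auto
  obtain g where g: "g \<in> borel_measurable \<nu>" "density \<nu> g = h"
    using \<nu>.Radon_Nikodym[OF ach] sets\<nu> ssh by auto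
  note [measurable] = f(1) g(1)
  define A where "A = {x \<in> space \<nu>. g x < f x}"
  have A: "A \<in> sets \<nu>" unfolding A_def by measurable
  have mA: "emeasure m A = (\<integral>\<^sup>+x. f x * indicator A x \<partial>\<nu>)"
    using A by (simp add: f(2)[symmetric] emeasure_density)
  have hA: "emeasure h A = (\<integral>\<^sup>+x. g x * indicator A x \<partial>\<nu>)"
    using A by (simp add: g(2)[symmetric] emeasure_density)
  have m1: "(\<integral>\<^sup>+x. f x \<partial>\<nu>) = 1"
  proof -
    have "(\<integral>\<^sup>+x. f x \<partial>\<nu>) = emeasure (density \<nu> f) (space \<nu>)"
      by (subst emeasure_density) (auto intro!: nn_integral_cong)
    also have "\<dots> = 1" using f(2) m.emeasure_space_1 \<open>space \<nu> = space m\<close> by simp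
    finally show ?thesis .
  qed
  have "(\<integral>\<^sup>+x. min (f x) (g x) \<partial>\<nu>) + emeasure m A
      = (\<integral>\<^sup>+x. min (f x) (g x) + f x * indicator A x \<partial>\<nu>)"
    unfolding mA using A by (intro nn_integral_add[symmetric]) auto
  also have "\<dots> = (\<integral>\<^sup>+x. f x + g x * indicator A x \<partial>\<nu>)"
    by (intro nn_integral_cong) (auto simp: A_def indicator_def min_def add.commute)
  also have "\<dots> = 1 + emeasure h A"
    unfolding hA m1[symmetric] using A by (intro nn_integral_add) auto
  finally have eq: "(\<integral>\<^sup>+x. min (f x) (g x) \<partial>\<nu>) + emeasure m A = 1 + emeasure h A" .
  have "(\<integral>\<^sup>+x. min (f x) (g x) \<partial>\<nu>) \<le> (\<integral>\<^sup>+x. f x \<partial>\<nu>)"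
    by (intro nn_integral_mono) auto
  then obtain c where c: "(\<integral>\<^sup>+x. min (f x) (g x) \<partial>\<nu>) = ennreal c" "0 \<le> c"
    using m1 by (metis ennreal_cases ennreal_le_1 ennreal_one_neq_top top_unique)
  have "A \<in> sets m" using A sets\<nu> by simp
  then have eq2: "c + measure m A = 1 + measure h A"
  proof -
    have "ennreal (c + measure m A) = ennreal (1 + measure h A)"
      using eq c by (simp add: m.emeasure_eq_measure h.emeasure_eq_measure ennreal_plus[symmetric] del: ennreal_plus) (metis ennreal_1 ennreal_plus measure_nonneg zero_le_one)
    then show ?thesis using c(2) by (subst (asm) ennreal_inj) auto
  qed
  have "\<bar>measure m A - measure h A\<bar> \<le> TV m h"
    using TV_bounds[OF pm ph ss \<open>A \<in> sets m\<close>] by simp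
  then have "1 - TV m h \<le> c" using eq2 by linarith
  then have "ennreal (1 - TV m h) \<le> (\<integral>\<^sup>+x. min (f x) (g x) \<partial>\<nu>)"
    using c by (simp add: ennreal_leI)
  then show ?thesis using that fin sets\<nu> f g by blast
qed

lemma prod_if_less:
  fixes a :: "'b::comm_monoid_mult"
  assumes "L \<le> N"
  shows "(\<Prod>i<N. if i < L then a else 1) = a ^ L"
proof -
  have "{..<N} \<inter> {x. x < L} = {..<L}" using assms by auto
  then show ?thesis by (simp add: prod.If_cases)
qed

definition psi :: "real \<Rightarrow> real \<Rightarrow> real" where
  "psi a b = (if a < b then 1 else if a = b then 1/2 else 0)"

lemma psi_sym: "psi a b + psi b a = 1" "0 \<le> psi a b"
  unfolding psi_def by auto

lemma ennreal_prod_mono: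
  fixes f g :: "'i \<Rightarrow> ennreal"
  assumes "\<And>i. i \<in> A \<Longrightarrow> f i \<le> g i"
  shows "prod f A \<le> prod g A"
  using assms
proof (induction A rule: infinite_finite_induct)
  case (insert x F)
  then show ?case by (simp add: mult_mono)
qed simp_all

lemma ennreal_half_comb:
  fixes x y :: real assumes xy: "0 \<le> x" "0 \<le> y"
  shows "ennreal x + ennreal (1/2) * ennreal y = ennreal (x + 1/2*y)"
proof -
  have "ennreal (x + 1/2*y) = ennreal x + ennreal (1/2*y)" by (rule ennreal_plus) (use xy in auto)
  also have "ennreal (1/2*y) = ennreal (1/2) * ennreal y" by (rule ennreal_mult) (use xy in auto)
  finally show ?thesis by simp
qed

theorem theorem2:
  fixes S :: "'a measure" and h m :: "'a measure"
    and n k :: nat and \<alpha> \<delta> :: real and L :: nat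
    and D :: "(nat \<Rightarrow> 'a) \<Rightarrow> real"
  assumes "prob_space h" and "prob_space m"
    and "sets h = sets S" and "sets m = sets S"
    and "\<delta> = TV m h" and "\<delta> > 0"
    and "0 \<le> \<alpha>" and "\<alpha> \<le> 1"
    and "real L = (1 - \<alpha>) * real n * real k"
    and "D \<in> borel_measurable (PiM {..<n*k} (\<lambda>_. S))"
  shows "AUROC (M_long m h L (n*k)) (H_long h (n*k)) D \<le> 1 - 1/2 * (1 - \<delta>) ^ (2 * L)"
proof -
  interpret m: prob_space m by fact
  interpret h: prob_space h by fact
  have ss: "sets m = sets h" using assms(3,4) by simp
  obtain \<nu> f g where nu: "finite_measure \<nu>" and sn: "sets \<nu> = sets m"
    and fm[measurable]: "f \<in> borel_measurable \<nu>" and gm[measurable]: "g \<in> borel_measurable \<nu>"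
    and df: "density \<nu> f = m" and dg: "density \<nu> g = h"
    and cp: "ennreal (1 - TV m h) \<le> (\<integral>\<^sup>+x. min (f x) (g x) \<partial>\<nu>)"
    using common_part[OF assms(2,1) ss] by blast
  interpret \<nu>: finite_measure \<nu> by fact
  have d1: "\<delta> \<le> 1" using TV_bounds(2)[OF assms(2,1) ss sets.empty_sets[of m]] assms(5) by simp
  define N where "N = n * k"
  have LN: "L \<le> N"
  proof -
    have e: "real L = (1 - \<alpha>) * (real n * real k)" using assms(9) by (metis mult.assoc)
    have "(1 - \<alpha>) * (real n * real k) \<le> real n * real k"
      by (rule mult_left_le_one_le) (use assms(7,8) in auto)
    then have "real L \<le> real (n * k)" unfolding e of_nat_mult .
    then show ?thesis unfolding N_def by (simp only: of_nat_le_iff)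
  qed
  define q where "q i = (if i < L then f else g)" for i
  define r where "r i = (if i < L then (\<lambda>x. min (f x) (g x)) else g)" for i
  have qm[measurable]: "q i \<in> borel_measurable \<nu>" for i unfolding q_def by auto
  have rm[measurable]: "r i \<in> borel_measurable \<nu>" for i unfolding r_def by auto
  define P where "P = PiM {..<N} (\<lambda>_. \<nu>)"
  interpret PS: product_sigma_finite "\<lambda>_. \<nu>"
    unfolding product_sigma_finite_def using nu by (simp add: finite_measure_def)
  have Psf: "sigma_finite_measure P" unfolding P_def by (rule PS.sigma_finite) simp
  interpret PP: pair_sigma_finite P P using Psf by (simp add: pair_sigma_finite_def)
  define F where "F x = (\<Prod>i<N. q i (x i))" for x
  define G where "G x = (\<Prod>i<N. g (x i))" for x
  define R where "R x = (\<Prod>i<N. r i (x i))" for x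
  have Fm[measurable]: "F \<in> borel_measurable P" unfolding F_def P_def by measurable
  have Gm[measurable]: "G \<in> borel_measurable P" unfolding G_def P_def by measurable
  have Rm[measurable]: "R \<in> borel_measurable P" unfolding R_def P_def by measurable
  have MM: "M_long m h L (n*k) = density P F"
  proof -
    have "(\<lambda>i. if i < L then m else h) = (\<lambda>i. density \<nu> (q i))"
      using df dg by (auto simp: q_def fun_eq_iff)
    moreover have "sigma_finite_measure (density \<nu> (q i))" for i
      using df dg assms(1,2) by (auto simp: q_def intro: prob_space_imp_sigma_finite)
    ultimately show ?thesis unfolding M_long_def P_def F_def N_def
      using PiM_density[of "{..<n*k}" \<nu> q] nu by (simp add: finite_measure_def)
  qed
  have HH: "H_long h (n*k) = density P G"
  proof -
    have "sigma_finite_measure (density \<nu> g)"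
      using dg assms(1) by (auto intro: prob_space_imp_sigma_finite)
    then show ?thesis unfolding H_long_def P_def G_def N_def using dg
      using PiM_density[of "{..<n*k}" \<nu> "\<lambda>_. g"] nu by (simp add: finite_measure_def)
  qed
  have sP: "sets P = sets (PiM {..<N} (\<lambda>_. S))"
    unfolding P_def by (intro sets_PiM_cong) (auto simp: sn assms(4))
  have DP[measurable]: "D \<in> borel_measurable P"
    using assms(10) measurable_cong_sets[OF sP, of borel borel] unfolding N_def by blast
  define MM where "MM = density P F"
  define HH' where "HH' = density P G"
  have pMM: "prob_space MM"
  proof -
    have "prob_space (M_long m h L (n*k))"
      unfolding M_long_def using assms(1,2) by (intro prob_space_PiM) auto
    then show ?thesis using MM MM_def by simp
  qed
  have pHH: "prob_space HH'"
  proof -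
    have "prob_space (H_long h (n*k))"
      unfolding H_long_def using assms(1,2) by (intro prob_space_PiM) auto
    then show ?thesis using HH HH'_def by simp
  qed
  interpret Q: pair_prob_space MM HH'
    unfolding pair_prob_space_def pair_sigma_finite_def using pMM pHH
    by (auto intro: prob_space_imp_sigma_finite)
  have DM[measurable]: "D \<in> borel_measurable MM"
    using DP measurable_cong_sets[of MM P borel borel] unfolding MM_def by simp
  have DH[measurable]: "D \<in> borel_measurable HH'"
    using DP measurable_cong_sets[of HH' P borel borel] unfolding HH'_def by simp
  define lt where "lt = {p \<in> space (MM \<Otimes>\<^sub>M HH'). D (fst p) < D (snd p)}"
  define eq where "eq = {p \<in> space (MM \<Otimes>\<^sub>M HH'). D (fst p) = D (snd p)}"
  define gt where "gt = {p \<in> space (MM \<Otimes>\<^sub>M HH'). D (fst p) > D (snd p)}"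
  have S[measurable]: "lt \<in> sets (MM \<Otimes>\<^sub>M HH')" "eq \<in> sets (MM \<Otimes>\<^sub>M HH')" "gt \<in> sets (MM \<Otimes>\<^sub>M HH')"
    unfolding lt_def eq_def gt_def by measurable
  have AU: "AUROC MM HH' D = measure (MM \<Otimes>\<^sub>M HH') gt + 1/2 * measure (MM \<Otimes>\<^sub>M HH') eq"
    unfolding AUROC_def gt_def eq_def by simp
  have tot: "measure (MM \<Otimes>\<^sub>M HH') gt + measure (MM \<Otimes>\<^sub>M HH') eq + measure (MM \<Otimes>\<^sub>M HH') lt = 1"
  proof -
    have "gt \<union> eq \<union> lt = space (MM \<Otimes>\<^sub>M HH')" unfolding gt_def eq_def lt_def by auto
    then have "measure (MM \<Otimes>\<^sub>M HH') (gt \<union> eq \<union> lt) = 1" using Q.prob_space by simp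
    moreover have "measure (MM \<Otimes>\<^sub>M HH') (gt \<union> eq \<union> lt) = measure (MM \<Otimes>\<^sub>M HH') (gt \<union> eq) + measure (MM \<Otimes>\<^sub>M HH') lt"
      using S by (intro Q.finite_measure_Union) (auto simp: gt_def eq_def lt_def)
    moreover have "measure (MM \<Otimes>\<^sub>M HH') (gt \<union> eq) = measure (MM \<Otimes>\<^sub>M HH') gt + measure (MM \<Otimes>\<^sub>M HH') eq"
      using S by (intro Q.finite_measure_Union) (auto simp: gt_def eq_def lt_def)
    ultimately show ?thesis by simp
  qed
  have key: "ennreal ((1 - \<delta>) ^ (2 * L)) \<le> 2 * ennreal (measure (MM \<Otimes>\<^sub>M HH') lt + 1/2 * measure (MM \<Otimes>\<^sub>M HH') eq)"
  proof -
    define \<phi> where "\<phi> x y = ennreal (psi (D x) (D y))" for x y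
    have \<phi>m[measurable]: "(\<lambda>p. \<phi> (fst p) (snd p)) \<in> borel_measurable (A \<Otimes>\<^sub>M B)"
      if "D \<in> borel_measurable A" "D \<in> borel_measurable B" for A B
      using that unfolding \<phi>_def psi_def by measurable
    have \<phi>m'[measurable]: "(\<lambda>(x, y). \<phi> x y) \<in> borel_measurable (P \<Otimes>\<^sub>M P)"
      using \<phi>m[OF DP DP] by (simp add: case_prod_beta')
    have \<phi>m1[measurable]: "\<phi> x \<in> borel_measurable P" for x
      unfolding \<phi>_def psi_def by measurable
    have \<phi>m2[measurable]: "(\<lambda>x. \<phi> x y) \<in> borel_measurable P" for y
      unfolding \<phi>_def psi_def by measurable
    have s1: "ennreal (measure (MM \<Otimes>\<^sub>M HH') lt + 1/2 * measure (MM \<Otimes>\<^sub>M HH') eq)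
        = (\<integral>\<^sup>+p. \<phi> (fst p) (snd p) \<partial>(MM \<Otimes>\<^sub>M HH'))"
    proof -
      have "(\<integral>\<^sup>+p. \<phi> (fst p) (snd p) \<partial>(MM \<Otimes>\<^sub>M HH'))
          = (\<integral>\<^sup>+p. indicator lt p + ennreal (1/2) * indicator eq p \<partial>(MM \<Otimes>\<^sub>M HH'))"
        by (intro nn_integral_cong) (auto simp: \<phi>_def psi_def lt_def eq_def indicator_def)
      also have "\<dots> = emeasure (MM \<Otimes>\<^sub>M HH') lt + ennreal (1/2) * emeasure (MM \<Otimes>\<^sub>M HH') eq"
        using S by (subst nn_integral_add) (auto simp: nn_integral_cmult)
      also have "\<dots> = ennreal (measure (MM \<Otimes>\<^sub>M HH') lt + 1/2 * measure (MM \<Otimes>\<^sub>M HH') eq)"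
        unfolding Q.emeasure_eq_measure by (rule ennreal_half_comb) auto
      finally show ?thesis by simp
    qed
    have s2: "(\<integral>\<^sup>+p. \<phi> (fst p) (snd p) \<partial>(MM \<Otimes>\<^sub>M HH')) = (\<integral>\<^sup>+x. \<integral>\<^sup>+y. \<phi> x y \<partial>HH' \<partial>MM)"
      using Q.M2.nn_integral_fst[OF \<phi>m[OF DM DH]] by simp
    have s3: "(\<integral>\<^sup>+x. \<integral>\<^sup>+y. \<phi> x y \<partial>HH' \<partial>MM) = (\<integral>\<^sup>+x. F x * (\<integral>\<^sup>+y. G y * \<phi> x y \<partial>P) \<partial>P)"
    proof -
      have "(\<integral>\<^sup>+x. \<integral>\<^sup>+y. \<phi> x y \<partial>HH' \<partial>MM) = (\<integral>\<^sup>+x. (\<integral>\<^sup>+y. G y * \<phi> x y \<partial>P) \<partial>MM)"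
        unfolding HH'_def by (intro nn_integral_cong) (simp add: nn_integral_density)
      also have "\<dots> = (\<integral>\<^sup>+x. F x * (\<integral>\<^sup>+y. G y * \<phi> x y \<partial>P) \<partial>P)"
        unfolding MM_def by (subst nn_integral_density) auto
      finally show ?thesis .
    qed
    have RF: "R x \<le> F x" "R x \<le> G x" for x
      unfolding R_def F_def G_def
      by (auto intro!: ennreal_prod_mono simp: r_def q_def)
    define K where "K x y = R x * R y * \<phi> x y" for x y
    have Km[measurable]: "(\<lambda>(x, y). K x y) \<in> borel_measurable (P \<Otimes>\<^sub>M P)"
      unfolding K_def by measurable
    define J where "J = (\<integral>\<^sup>+x. \<integral>\<^sup>+y. K x y \<partial>P \<partial>P)"
    have s4: "J \<le> (\<integral>\<^sup>+x. F x * (\<integral>\<^sup>+y. G y * \<phi> x y \<partial>P) \<partial>P)"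
    proof -
      have "J = (\<integral>\<^sup>+x. R x * (\<integral>\<^sup>+y. R y * \<phi> x y \<partial>P) \<partial>P)"
        unfolding J_def K_def
        by (intro nn_integral_cong) (simp add: nn_integral_cmult[symmetric] mult.assoc)
      also have "\<dots> \<le> (\<integral>\<^sup>+x. F x * (\<integral>\<^sup>+y. G y * \<phi> x y \<partial>P) \<partial>P)"
        by (intro nn_integral_mono mult_mono RF) auto
      finally show ?thesis .
    qed
    have J2: "J = (\<integral>\<^sup>+x. \<integral>\<^sup>+y. K y x \<partial>P \<partial>P)"
      unfolding J_def using PP.Fubini'[OF Km] by simp
    have IR: "(\<integral>\<^sup>+x. R x \<partial>P) = (\<integral>\<^sup>+x. min (f x) (g x) \<partial>\<nu>) ^ L"
    proof -
      have g1: "(\<integral>\<^sup>+x. g x \<partial>\<nu>) = 1"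
      proof -
        have "(\<integral>\<^sup>+x. g x \<partial>\<nu>) = emeasure (density \<nu> g) (space \<nu>)"
          by (subst emeasure_density) (auto intro!: nn_integral_cong)
        also have "\<dots> = 1"
        proof -
          have "space \<nu> = space h" using sn ss by (metis sets_eq_imp_space_eq)
          then show ?thesis using dg h.emeasure_space_1 by simp
        qed
        finally show ?thesis .
      qed
      have "(\<integral>\<^sup>+x. R x \<partial>P) = (\<Prod>i<N. \<integral>\<^sup>+x. r i x \<partial>\<nu>)"
        unfolding R_def P_def by (rule PS.product_nn_integral_prod) auto
      also have "\<dots> = (\<Prod>i<N. if i < L then (\<integral>\<^sup>+x. min (f x) (g x) \<partial>\<nu>) else 1)"
        by (intro prod.cong refl) (simp add: r_def g1)
      also have "\<dots> = (\<integral>\<^sup>+x. min (f x) (g x) \<partial>\<nu>) ^ L"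
        by (rule prod_if_less[OF LN])
      finally show ?thesis .
    qed
    have s6: "J + J = (\<integral>\<^sup>+x. R x \<partial>P) * (\<integral>\<^sup>+x. R x \<partial>P)"
    proof -
      have "J + J = (\<integral>\<^sup>+x. (\<integral>\<^sup>+y. K x y \<partial>P) + (\<integral>\<^sup>+y. K y x \<partial>P) \<partial>P)"
        by (subst J2, unfold J_def, subst nn_integral_add[symmetric]) auto
      also have "\<dots> = (\<integral>\<^sup>+x. (\<integral>\<^sup>+y. K x y + K y x \<partial>P) \<partial>P)"
        by (intro nn_integral_cong) (simp add: nn_integral_add)
      also have "\<dots> = (\<integral>\<^sup>+x. (\<integral>\<^sup>+y. R x * R y \<partial>P) \<partial>P)"
      proof (intro nn_integral_cong)
        fix x y
        have "\<phi> x y + \<phi> y x = 1"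
          unfolding \<phi>_def using psi_sym[of "D x" "D y"] psi_sym(2)[of "D y" "D x"]
          by (simp add: ennreal_plus[symmetric] del: ennreal_plus)
        then show "K x y + K y x = R x * R y"
          unfolding K_def by (metis distrib_left mult.commute mult_1_right)
      qed
      also have "\<dots> = (\<integral>\<^sup>+x. R x \<partial>P) * (\<integral>\<^sup>+x. R x \<partial>P)"
        by (simp add: nn_integral_cmult nn_integral_multc)
      finally show ?thesis .
    qed
    have t0: "0 \<le> 1 - \<delta>" using d1 by simp
    have "ennreal (1 - \<delta>) ^ L \<le> (\<integral>\<^sup>+x. min (f x) (g x) \<partial>\<nu>) ^ L"
      using cp assms(5) by (intro power_mono) auto
    then have tl: "ennreal ((1 - \<delta>) ^ L) \<le> (\<integral>\<^sup>+x. R x \<partial>P)"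
      using t0 IR by (simp add: ennreal_power)
    have "ennreal ((1 - \<delta>) ^ (2 * L)) = ennreal ((1 - \<delta>) ^ L) * ennreal ((1 - \<delta>) ^ L)"
      using t0 by (simp add: ennreal_mult[symmetric] power_mult power2_eq_square mult.commute power_add[symmetric] mult_2)
    also have "\<dots> \<le> (\<integral>\<^sup>+x. R x \<partial>P) * (\<integral>\<^sup>+x. R x \<partial>P)"
      by (rule mult_mono[OF tl tl]) simp_all
    also have "\<dots> = J + J" using s6 by simp
    also have "\<dots> \<le> (\<integral>\<^sup>+p. \<phi> (fst p) (snd p) \<partial>(MM \<Otimes>\<^sub>M HH')) + (\<integral>\<^sup>+p. \<phi> (fst p) (snd p) \<partial>(MM \<Otimes>\<^sub>M HH'))"
    proof -
      have JX: "J \<le> (\<integral>\<^sup>+p. \<phi> (fst p) (snd p) \<partial>(MM \<Otimes>\<^sub>M HH'))"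
        using s4 unfolding s2 s3 .
      show ?thesis by (rule add_mono[OF JX JX])
    qed
    also have "\<dots> = 2 * ennreal (measure (MM \<Otimes>\<^sub>M HH') lt + 1/2 * measure (MM \<Otimes>\<^sub>M HH') eq)"
      by (simp only: s1[symmetric] mult_2)
    finally show ?thesis .
  qed
  have "(1 - \<delta>) ^ (2 * L) \<le> 2 * (measure (MM \<Otimes>\<^sub>M HH') lt + 1/2 * measure (MM \<Otimes>\<^sub>M HH') eq)"
  proof -
    have "ennreal ((1 - \<delta>) ^ (2 * L)) \<le> ennreal (2 * (measure (MM \<Otimes>\<^sub>M HH') lt + 1/2 * measure (MM \<Otimes>\<^sub>M HH') eq))"
    proof -
      have Xnn: "0 \<le> measure (MM \<Otimes>\<^sub>M HH') lt + 1/2 * measure (MM \<Otimes>\<^sub>M HH') eq" by simp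
      have e2: "2 * ennreal (measure (MM \<Otimes>\<^sub>M HH') lt + 1/2 * measure (MM \<Otimes>\<^sub>M HH') eq)
          = ennreal (2 * (measure (MM \<Otimes>\<^sub>M HH') lt + 1/2 * measure (MM \<Otimes>\<^sub>M HH') eq))"
        using Xnn by (metis ennreal_mult ennreal_numeral zero_le_numeral)
      show ?thesis using key unfolding e2 .
    qed
    moreover have "0 \<le> 2 * (measure (MM \<Otimes>\<^sub>M HH') lt + 1/2 * measure (MM \<Otimes>\<^sub>M HH') eq)" by simp
    ultimately show ?thesis using ennreal_le_iff by blast
  qed
  moreover have "AUROC (M_long m h L (n*k)) (H_long h (n*k)) D = AUROC MM HH' D"
    unfolding MM HH MM_def HH'_def ..
  ultimately show ?thesis using AU tot by (simp add: N_def) 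
qed

end
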